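(* Let $\mathcal T$ be an essentially small triangulated category and $\mathscr M$ the class of good metrics on $\mathcal T$, with $\sim$ the equivalence of metrics. Then $\mathscr M/\!\sim$, ordered by $\le$, is a lattice. For good metrics $\mathcal A=\{A_n\}_{n}$ and $\mathcal C=\{C_n\}_n$, the meet is $[\mathcal A]\wedge[\mathcal C]=[\{A_n\cap C_n\}_{n}]$ and the join is $[\mathcal A]\vee[\mathcal C]=[\{\overline{A_n\cup C_n}\}_n]$ (both well defined, i.e. independent of the representatives).
   Context: A good metric is a chain $B_1\supseteq B_2\supseteq\cdots$ of full subcategories of $\mathcal T$ each containing $0$, closed under extensions, with $\Sigma^{-1}B_{n+1}\cup B_{n+1}\cup\Sigma B_{n+1}\subseteq B_n$. $\{A_n\}\le\{C_n\}$ if for every $n$ there is $m$ with $A_m\subseteq C_n$; $\mathcal A\sim\mathcal C$ if $\mathcal A\le\mathcal C$ and $\mathcal C\le\mathcal A$. For a class $\mathcal X$, $\overline{\mathcal X}$ is the smallest full subcategory containing $\mathcal X$ and $0$ closed under extensions. *)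

theory Defs
  imports Main
begin

record ('o,'m) tcat =
  tc_Obj  :: "'o set"
  tc_Hom  :: "'o \<Rightarrow> 'o \<Rightarrow> 'm set"
  tc_cmp  :: "'m \<Rightarrow> 'm \<Rightarrow> 'm"      (* tc_cmp T g f = g o f *)
  tc_idm  :: "'o \<Rightarrow> 'm"
  tc_add  :: "'m \<Rightarrow> 'm \<Rightarrow> 'm"
  tc_zero :: "'o \<Rightarrow> 'o \<Rightarrow> 'm"
  tc_neg  :: "'m \<Rightarrow> 'm"
  tc_shO  :: "'o \<Rightarrow> 'o"
  tc_shM  :: "'m \<Rightarrow> 'm"
  tc_Dist :: "('o \<times> 'o \<times> 'o \<times> 'm \<times> 'm \<times> 'm) set"  (* distinguished triangles X->Y->Z->SX *)

definition is_category :: "('o,'m) tcat \<Rightarrow> bool" where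
  "is_category T \<longleftrightarrow>
    (\<forall>X Y. tc_Hom T X Y \<noteq> {} \<longrightarrow> X \<in> tc_Obj T \<and> Y \<in> tc_Obj T) \<and>
    (\<forall>X\<in>tc_Obj T. tc_idm T X \<in> tc_Hom T X X) \<and>
    (\<forall>X Y Z f g. f \<in> tc_Hom T X Y \<longrightarrow> g \<in> tc_Hom T Y Z \<longrightarrow> tc_cmp T g f \<in> tc_Hom T X Z) \<and>
    (\<forall>W X Y Z f g h. f \<in> tc_Hom T W X \<longrightarrow> g \<in> tc_Hom T X Y \<longrightarrow> h \<in> tc_Hom T Y Z \<longrightarrow>
        tc_cmp T h (tc_cmp T g f) = tc_cmp T (tc_cmp T h g) f) \<and>
    (\<forall>X Y f. f \<in> tc_Hom T X Y \<longrightarrow> tc_cmp T (tc_idm T Y) f = f \<and> tc_cmp T f (tc_idm T X) = f)"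

definition is_preadditive :: "('o,'m) tcat \<Rightarrow> bool" where
  "is_preadditive T \<longleftrightarrow> is_category T \<and>
    (\<forall>X\<in>tc_Obj T. \<forall>Y\<in>tc_Obj T.
       tc_zero T X Y \<in> tc_Hom T X Y \<and>
       (\<forall>f\<in>tc_Hom T X Y. \<forall>g\<in>tc_Hom T X Y.
          tc_add T f g \<in> tc_Hom T X Y \<and> tc_add T f g = tc_add T g f) \<and>
       (\<forall>f\<in>tc_Hom T X Y. \<forall>g\<in>tc_Hom T X Y. \<forall>h\<in>tc_Hom T X Y.
          tc_add T (tc_add T f g) h = tc_add T f (tc_add T g h)) \<and>
       (\<forall>f\<in>tc_Hom T X Y. tc_add T f (tc_zero T X Y) = f \<and>
          tc_neg T f \<in> tc_Hom T X Y \<and> tc_add T f (tc_neg T f) = tc_zero T X Y)) \<and>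
    (\<forall>X Y Z f f' g. f \<in> tc_Hom T X Y \<longrightarrow> f' \<in> tc_Hom T X Y \<longrightarrow> g \<in> tc_Hom T Y Z \<longrightarrow>
        tc_cmp T g (tc_add T f f') = tc_add T (tc_cmp T g f) (tc_cmp T g f')) \<and>
    (\<forall>X Y Z f g g'. f \<in> tc_Hom T X Y \<longrightarrow> g \<in> tc_Hom T Y Z \<longrightarrow> g' \<in> tc_Hom T Y Z \<longrightarrow>
        tc_cmp T (tc_add T g g') f = tc_add T (tc_cmp T g f) (tc_cmp T g' f))"

definition is_iso :: "('o,'m) tcat \<Rightarrow> 'o \<Rightarrow> 'o \<Rightarrow> 'm \<Rightarrow> bool" where
  "is_iso T X Y f \<longleftrightarrow> f \<in> tc_Hom T X Y \<and>
     (\<exists>g\<in>tc_Hom T Y X. tc_cmp T g f = tc_idm T X \<and> tc_cmp T f g = tc_idm T Y)"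

definition is_zero_obj :: "('o,'m) tcat \<Rightarrow> 'o \<Rightarrow> bool" where
  "is_zero_obj T Z \<longleftrightarrow> Z \<in> tc_Obj T \<and>
     (\<forall>Y\<in>tc_Obj T. (\<exists>!f. f \<in> tc_Hom T Z Y) \<and> (\<exists>!f. f \<in> tc_Hom T Y Z))"

definition is_biproduct :: "('o,'m) tcat \<Rightarrow> 'o \<Rightarrow> 'o \<Rightarrow> 'o \<Rightarrow> 'm \<Rightarrow> 'm \<Rightarrow> 'm \<Rightarrow> 'm \<Rightarrow> bool" where
  "is_biproduct T X Y P i1 i2 p1 p2 \<longleftrightarrow> P \<in> tc_Obj T \<and>
     i1 \<in> tc_Hom T X P \<and> i2 \<in> tc_Hom T Y P \<and> p1 \<in> tc_Hom T P X \<and> p2 \<in> tc_Hom T P Y \<and>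
     tc_cmp T p1 i1 = tc_idm T X \<and> tc_cmp T p2 i2 = tc_idm T Y \<and>
     tc_cmp T p1 i2 = tc_zero T Y X \<and> tc_cmp T p2 i1 = tc_zero T X Y \<and>
     tc_add T (tc_cmp T i1 p1) (tc_cmp T i2 p2) = tc_idm T P"

definition is_additive :: "('o,'m) tcat \<Rightarrow> bool" where
  "is_additive T \<longleftrightarrow> is_preadditive T \<and> (\<exists>Z. is_zero_obj T Z) \<and>
     (\<forall>X\<in>tc_Obj T. \<forall>Y\<in>tc_Obj T. \<exists>P i1 i2 p1 p2. is_biproduct T X Y P i1 i2 p1 p2)"

definition is_shift_autoequiv :: "('o,'m) tcat \<Rightarrow> bool" where
  "is_shift_autoequiv T \<longleftrightarrow>
    (\<forall>X\<in>tc_Obj T. tc_shO T X \<in> tc_Obj T) \<and>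
    (\<forall>X Y f. f \<in> tc_Hom T X Y \<longrightarrow> tc_shM T f \<in> tc_Hom T (tc_shO T X) (tc_shO T Y)) \<and>
    (\<forall>X\<in>tc_Obj T. tc_shM T (tc_idm T X) = tc_idm T (tc_shO T X)) \<and>
    (\<forall>X Y Z f g. f \<in> tc_Hom T X Y \<longrightarrow> g \<in> tc_Hom T Y Z \<longrightarrow>
        tc_shM T (tc_cmp T g f) = tc_cmp T (tc_shM T g) (tc_shM T f)) \<and>
    (\<forall>X Y f g. f \<in> tc_Hom T X Y \<longrightarrow> g \<in> tc_Hom T X Y \<longrightarrow>
        tc_shM T (tc_add T f g) = tc_add T (tc_shM T f) (tc_shM T g)) \<and>
    (\<forall>X\<in>tc_Obj T. \<forall>Y\<in>tc_Obj T.
        bij_betw (tc_shM T) (tc_Hom T X Y) (tc_Hom T (tc_shO T X) (tc_shO T Y))) \<and>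
    (\<forall>Y\<in>tc_Obj T. \<exists>X\<in>tc_Obj T. \<exists>f. is_iso T (tc_shO T X) Y f)"

definition is_triangle :: "('o,'m) tcat \<Rightarrow> 'o \<times> 'o \<times> 'o \<times> 'm \<times> 'm \<times> 'm \<Rightarrow> bool" where
  "is_triangle T t = (case t of (X,Y,Z,f,g,h) \<Rightarrow>
     f \<in> tc_Hom T X Y \<and> g \<in> tc_Hom T Y Z \<and> h \<in> tc_Hom T Z (tc_shO T X))"

definition tri_mor :: "('o,'m) tcat \<Rightarrow> 'o \<times> 'o \<times> 'o \<times> 'm \<times> 'm \<times> 'm \<Rightarrow>
    'o \<times> 'o \<times> 'o \<times> 'm \<times> 'm \<times> 'm \<Rightarrow> 'm \<Rightarrow> 'm \<Rightarrow> 'm \<Rightarrow> bool" where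
  "tri_mor T t t' a b c = (case t of (X,Y,Z,f,g,h) \<Rightarrow> case t' of (X',Y',Z',f',g',h') \<Rightarrow>
     a \<in> tc_Hom T X X' \<and> b \<in> tc_Hom T Y Y' \<and> c \<in> tc_Hom T Z Z' \<and>
     tc_cmp T b f = tc_cmp T f' a \<and> tc_cmp T c g = tc_cmp T g' b \<and>
     tc_cmp T (tc_shM T a) h = tc_cmp T h' c)"

definition tri_iso :: "('o,'m) tcat \<Rightarrow> 'o \<times> 'o \<times> 'o \<times> 'm \<times> 'm \<times> 'm \<Rightarrow>
    'o \<times> 'o \<times> 'o \<times> 'm \<times> 'm \<times> 'm \<Rightarrow> 'm \<Rightarrow> 'm \<Rightarrow> 'm \<Rightarrow> bool" where
  "tri_iso T t t' a b c = (tri_mor T t t' a b c \<and> (case t of (X,Y,Z,_) \<Rightarrow> case t' of (X',Y',Z',_) \<Rightarrow>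
     is_iso T X X' a \<and> is_iso T Y Y' b \<and> is_iso T Z Z' c))"

definition is_triangulated :: "('o,'m) tcat \<Rightarrow> bool" where
  "is_triangulated T \<longleftrightarrow> is_additive T \<and> is_shift_autoequiv T \<and>
    \<comment> \<open>TR1\<close>
    (\<forall>t\<in>tc_Dist T. is_triangle T t) \<and>
    (\<forall>t t' a b c. t \<in> tc_Dist T \<and> is_triangle T t' \<and> tri_iso T t t' a b c \<longrightarrow> t' \<in> tc_Dist T) \<and>
    (\<forall>X\<in>tc_Obj T. \<forall>Z. is_zero_obj T Z \<longrightarrow>
        (X, X, Z, tc_idm T X, tc_zero T X Z, tc_zero T Z (tc_shO T X)) \<in> tc_Dist T) \<and>
    (\<forall>X Y f. f \<in> tc_Hom T X Y \<longrightarrow> (\<exists>Z g h. (X,Y,Z,f,g,h) \<in> tc_Dist T)) \<and>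
    \<comment> \<open>TR2 (rotation)\<close>
    (\<forall>X Y Z f g h. is_triangle T (X,Y,Z,f,g,h) \<longrightarrow>
        ((X,Y,Z,f,g,h) \<in> tc_Dist T \<longleftrightarrow> (Y, Z, tc_shO T X, g, h, tc_neg T (tc_shM T f)) \<in> tc_Dist T)) \<and>
    \<comment> \<open>TR3\<close>
    (\<forall>X Y Z f g h X' Y' Z' f' g' h' a b.
        (X,Y,Z,f,g,h) \<in> tc_Dist T \<and> (X',Y',Z',f',g',h') \<in> tc_Dist T \<and>
        a \<in> tc_Hom T X X' \<and> b \<in> tc_Hom T Y Y' \<and> tc_cmp T b f = tc_cmp T f' a \<longrightarrow>
        (\<exists>c. tri_mor T (X,Y,Z,f,g,h) (X',Y',Z',f',g',h') a b c)) \<and>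
    \<comment> \<open>TR4 (octahedral axiom)\<close>
    (\<forall>X Y Z Z' X' Y' u v j k l i m n.
        (X,Y,Z',u,j,k) \<in> tc_Dist T \<and> (Y,Z,X',v,l,i) \<in> tc_Dist T \<and>
        (X,Z,Y',tc_cmp T v u,m,n) \<in> tc_Dist T \<longrightarrow>
        (\<exists>f g. (Z',Y',X',f,g,tc_cmp T (tc_shM T j) i) \<in> tc_Dist T \<and>
           tc_cmp T f j = tc_cmp T m v \<and> tc_cmp T n f = k \<and>
           tc_cmp T g m = l \<and> tc_cmp T (tc_shM T u) n = tc_cmp T i g))"

definition contains_zero :: "('o,'m) tcat \<Rightarrow> 'o set \<Rightarrow> bool" where
  "contains_zero T B \<longleftrightarrow> (\<exists>Z\<in>B. is_zero_obj T Z)"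

definition ext_closed :: "('o,'m) tcat \<Rightarrow> 'o set \<Rightarrow> bool" where
  "ext_closed T B \<longleftrightarrow>
     (\<forall>X Y Z f g h. (X,Y,Z,f,g,h) \<in> tc_Dist T \<and> X \<in> B \<and> Z \<in> B \<longrightarrow> Y \<in> B)"

text \<open>Full subcategories are identified with their classes of objects.\<close>
definition good_metric :: "('o,'m) tcat \<Rightarrow> (nat \<Rightarrow> 'o set) \<Rightarrow> bool" where
  "good_metric T B \<longleftrightarrow>
     (\<forall>n. B n \<subseteq> tc_Obj T \<and> contains_zero T (B n) \<and> ext_closed T (B n)) \<and>
     (\<forall>n. B (Suc n) \<subseteq> B n) \<and>
     (\<forall>n. {X \<in> tc_Obj T. tc_shO T X \<in> B (Suc n)} \<union> B (Suc n) \<union> tc_shO T ` B (Suc n) \<subseteq> B n)"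

definition metric_le :: "(nat \<Rightarrow> 'o set) \<Rightarrow> (nat \<Rightarrow> 'o set) \<Rightarrow> bool" where
  "metric_le A C \<longleftrightarrow> (\<forall>n. \<exists>m. A m \<subseteq> C n)"

definition metric_equiv :: "(nat \<Rightarrow> 'o set) \<Rightarrow> (nat \<Rightarrow> 'o set) \<Rightarrow> bool" where
  "metric_equiv A C \<longleftrightarrow> metric_le A C \<and> metric_le C A"

inductive_set ext_hull :: "('o,'m) tcat \<Rightarrow> 'o set \<Rightarrow> 'o set" for T X where
  base: "x \<in> X \<Longrightarrow> x \<in> ext_hull T X"
| zero: "is_zero_obj T Z \<Longrightarrow> Z \<in> ext_hull T X"
| ext: "(A,B,C,f,g,h) \<in> tc_Dist T \<Longrightarrow> A \<in> ext_hull T X \<Longrightarrow> C \<in> ext_hull T X \<Longrightarrow> B \<in> ext_hull T X"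

definition metric_meet :: "(nat \<Rightarrow> 'o set) \<Rightarrow> (nat \<Rightarrow> 'o set) \<Rightarrow> nat \<Rightarrow> 'o set" where
  "metric_meet A C = (\<lambda>n. A n \<inter> C n)"

definition metric_join :: "('o,'m) tcat \<Rightarrow> (nat \<Rightarrow> 'o set) \<Rightarrow> (nat \<Rightarrow> 'o set) \<Rightarrow> nat \<Rightarrow> 'o set" where
  "metric_join T A C = (\<lambda>n. ext_hull T (A n \<union> C n))"

end

theory Submission imports Defs begin

locale trcat = fixes T :: "('o,'m) tcat" assumes tri: "is_triangulated T"
begin

lemma addv: "is_additive T" using tri unfolding is_triangulated_def by (rule conjunct1)
lemma shf: "is_shift_autoequiv T" using tri unfolding is_triangulated_def by (rule conjunct1[OF conjunct2])
lemma pre: "is_preadditive T" using addv unfolding is_additive_def by (rule conjunct1)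
lemma cat: "is_category T" using pre unfolding is_preadditive_def by (rule conjunct1)

lemmas C = cat[unfolded is_category_def]
lemmas P = pre[unfolded is_preadditive_def]
lemmas S = shf[unfolded is_shift_autoequiv_def]
lemmas TT = tri[unfolded is_triangulated_def]

lemma hom_obj: "f \<in> tc_Hom T X Y \<Longrightarrow> X \<in> tc_Obj T \<and> Y \<in> tc_Obj T"
  using C[THEN conjunct1] by blast
lemma cid: "X \<in> tc_Obj T \<Longrightarrow> tc_idm T X \<in> tc_Hom T X X"
  using C[THEN conjunct2, THEN conjunct1] by blast
lemma ccmp: "f \<in> tc_Hom T X Y \<Longrightarrow> g \<in> tc_Hom T Y Z \<Longrightarrow> tc_cmp T g f \<in> tc_Hom T X Z"
  using C[THEN conjunct2, THEN conjunct2, THEN conjunct1] by blast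
lemma cassoc: "f \<in> tc_Hom T W X \<Longrightarrow> g \<in> tc_Hom T X Y \<Longrightarrow> h \<in> tc_Hom T Y Z \<Longrightarrow>
        tc_cmp T h (tc_cmp T g f) = tc_cmp T (tc_cmp T h g) f"
  using C[THEN conjunct2, THEN conjunct2, THEN conjunct2, THEN conjunct1] by blast
lemma cidl: "f \<in> tc_Hom T X Y \<Longrightarrow> tc_cmp T (tc_idm T Y) f = f"
  using C[THEN conjunct2, THEN conjunct2, THEN conjunct2, THEN conjunct2] by blast
lemma cidr: "f \<in> tc_Hom T X Y \<Longrightarrow> tc_cmp T f (tc_idm T X) = f"
  using C[THEN conjunct2, THEN conjunct2, THEN conjunct2, THEN conjunct2] by blast

lemma PXY: assumes "X \<in> tc_Obj T" "Y \<in> tc_Obj T"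
  shows "tc_zero T X Y \<in> tc_Hom T X Y \<and>
       (\<forall>f\<in>tc_Hom T X Y. \<forall>g\<in>tc_Hom T X Y.
          tc_add T f g \<in> tc_Hom T X Y \<and> tc_add T f g = tc_add T g f) \<and>
       (\<forall>f\<in>tc_Hom T X Y. \<forall>g\<in>tc_Hom T X Y. \<forall>h\<in>tc_Hom T X Y.
          tc_add T (tc_add T f g) h = tc_add T f (tc_add T g h)) \<and>
       (\<forall>f\<in>tc_Hom T X Y. tc_add T f (tc_zero T X Y) = f \<and>
          tc_neg T f \<in> tc_Hom T X Y \<and> tc_add T f (tc_neg T f) = tc_zero T X Y)"
  using bspec[OF bspec[OF P[THEN conjunct2, THEN conjunct1] assms(1)] assms(2)] .

lemma zhom: "X \<in> tc_Obj T \<Longrightarrow> Y \<in> tc_Obj T \<Longrightarrow> tc_zero T X Y \<in> tc_Hom T X Y"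
  using PXY by blast
lemma neghom: "f \<in> tc_Hom T X Y \<Longrightarrow> tc_neg T f \<in> tc_Hom T X Y"
  using PXY[THEN conjunct2, THEN conjunct2, THEN conjunct2] hom_obj by blast

lemma negneg: assumes m: "m \<in> tc_Hom T X Y" shows "tc_neg T (tc_neg T m) = m"
proof -
  have X: "X \<in> tc_Obj T" "Y \<in> tc_Obj T" using hom_obj[OF m] by auto
  let ?a = "tc_add T" let ?z = "tc_zero T X Y"
  define n where "n = tc_neg T m"
  define nn where "nn = tc_neg T n"
  have P: "\<forall>f\<in>tc_Hom T X Y. \<forall>g\<in>tc_Hom T X Y. tc_add T f g \<in> tc_Hom T X Y \<and> tc_add T f g = tc_add T g f"
    "\<forall>f\<in>tc_Hom T X Y. \<forall>g\<in>tc_Hom T X Y. \<forall>h\<in>tc_Hom T X Y.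
          tc_add T (tc_add T f g) h = tc_add T f (tc_add T g h)"
    "\<forall>f\<in>tc_Hom T X Y. tc_add T f ?z = f \<and>
          tc_neg T f \<in> tc_Hom T X Y \<and> tc_add T f (tc_neg T f) = ?z"
    using PXY[OF X] by blast+
  have n: "n \<in> tc_Hom T X Y" and nn: "nn \<in> tc_Hom T X Y" using P(3) m n_def nn_def by auto
  have "nn = ?a nn ?z" using P(3) nn by auto
  also have "\<dots> = ?a nn (?a n m)" using P m n n_def by metis
  also have "\<dots> = ?a (?a nn n) m" using P(2) m n nn by metis
  also have "\<dots> = ?a ?z m" using P n nn nn_def by metis
  also have "\<dots> = m" using P m X zhom by metis
  finally show ?thesis unfolding nn_def n_def by simp
qed

lemma shobj: "X \<in> tc_Obj T \<Longrightarrow> tc_shO T X \<in> tc_Obj T"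
  using S[THEN conjunct1] by blast
lemma shhom: "f \<in> tc_Hom T X Y \<Longrightarrow> tc_shM T f \<in> tc_Hom T (tc_shO T X) (tc_shO T Y)"
  using S[THEN conjunct2, THEN conjunct1] by blast
lemma shbij: "X \<in> tc_Obj T \<Longrightarrow> Y \<in> tc_Obj T \<Longrightarrow>
        bij_betw (tc_shM T) (tc_Hom T X Y) (tc_Hom T (tc_shO T X) (tc_shO T Y))"
  using S[THEN conjunct2, THEN conjunct2, THEN conjunct2, THEN conjunct2, THEN conjunct2, THEN conjunct1] by blast
lemma shsurj: "Y \<in> tc_Obj T \<Longrightarrow> \<exists>X\<in>tc_Obj T. \<exists>f. is_iso T (tc_shO T X) Y f"
  using S[THEN conjunct2, THEN conjunct2, THEN conjunct2, THEN conjunct2, THEN conjunct2, THEN conjunct2] by blast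

lemma full: assumes "m \<in> tc_Hom T (tc_shO T P) (tc_shO T Q)" "P \<in> tc_Obj T" "Q \<in> tc_Obj T"
  shows "\<exists>u\<in>tc_Hom T P Q. tc_shM T u = m"
  using shbij[OF assms(2,3)] assms(1) unfolding bij_betw_def by (metis imageE)

lemma dist_tri: "t \<in> tc_Dist T \<Longrightarrow> is_triangle T t"
  using TT[THEN conjunct2, THEN conjunct2, THEN conjunct1] by blast
lemma dist_iso: "t \<in> tc_Dist T \<Longrightarrow> is_triangle T t' \<Longrightarrow> tri_iso T t t' a b c \<Longrightarrow> t' \<in> tc_Dist T"
  using TT[THEN conjunct2, THEN conjunct2, THEN conjunct2, THEN conjunct1] by blast
lemma dist_triv: "X \<in> tc_Obj T \<Longrightarrow> is_zero_obj T Z \<Longrightarrow>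
        (X, X, Z, tc_idm T X, tc_zero T X Z, tc_zero T Z (tc_shO T X)) \<in> tc_Dist T"
  using TT[THEN conjunct2, THEN conjunct2, THEN conjunct2, THEN conjunct2, THEN conjunct1] by blast
lemma rot_iff: "is_triangle T (X,Y,Z,f,g,h) \<Longrightarrow>
        ((X,Y,Z,f,g,h) \<in> tc_Dist T \<longleftrightarrow> (Y, Z, tc_shO T X, g, h, tc_neg T (tc_shM T f)) \<in> tc_Dist T)"
  using TT[THEN conjunct2, THEN conjunct2, THEN conjunct2, THEN conjunct2, THEN conjunct2, THEN conjunct2, THEN conjunct1] by blast
lemma rot: "(X,Y,Z,f,g,h) \<in> tc_Dist T \<Longrightarrow> (Y, Z, tc_shO T X, g, h, tc_neg T (tc_shM T f)) \<in> tc_Dist T"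
  using rot_iff dist_tri by blast
lemma exzero: "\<exists>Z. is_zero_obj T Z"
  using addv unfolding is_additive_def by blast

lemma zero_unique: "is_zero_obj T Z \<Longrightarrow> Y \<in> tc_Obj T \<Longrightarrow> f \<in> tc_Hom T Z Y \<Longrightarrow> g \<in> tc_Hom T Z Y \<Longrightarrow> f = g"
  unfolding is_zero_obj_def by blast
lemma zero_unique2: "is_zero_obj T Z \<Longrightarrow> Y \<in> tc_Obj T \<Longrightarrow> f \<in> tc_Hom T Y Z \<Longrightarrow> g \<in> tc_Hom T Y Z \<Longrightarrow> f = g"
  unfolding is_zero_obj_def by blast
lemma zero_obj: "is_zero_obj T Z \<Longrightarrow> Z \<in> tc_Obj T"
  unfolding is_zero_obj_def by blast

lemma iso_inv: assumes "is_iso T X Y f"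
  shows "\<exists>g. is_iso T Y X g \<and> tc_cmp T g f = tc_idm T X \<and> tc_cmp T f g = tc_idm T Y"
  using assms unfolding is_iso_def by blast

lemma iso_id: "X \<in> tc_Obj T \<Longrightarrow> is_iso T X X (tc_idm T X)"
  unfolding is_iso_def using cid cidl by metis

lemma iso_closed:
  assumes B: "ext_closed T B" and Z0: "Z0 \<in> B" "is_zero_obj T Z0" and X: "X \<in> B"
    and phi: "is_iso T X X' \<phi>"
  shows "X' \<in> B"
proof -
  have ph: "\<phi> \<in> tc_Hom T X X'" using phi unfolding is_iso_def by auto
  have O: "X \<in> tc_Obj T" "X' \<in> tc_Obj T" "Z0 \<in> tc_Obj T" "tc_shO T X \<in> tc_Obj T"
    using hom_obj[OF ph] zero_obj[OF Z0(2)] shobj by auto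
  have d: "(X, X, Z0, tc_idm T X, tc_zero T X Z0, tc_zero T Z0 (tc_shO T X)) \<in> tc_Dist T"
    using dist_triv O Z0 by auto
  have tr: "is_triangle T (X, X', Z0, \<phi>, tc_zero T X' Z0, tc_zero T Z0 (tc_shO T X))"
    unfolding is_triangle_def using ph zhom O by auto
  have e1: "tc_cmp T (tc_idm T Z0) (tc_zero T X Z0) = tc_cmp T (tc_zero T X' Z0) \<phi>"
    by (rule zero_unique2[OF Z0(2) O(1)]) (use ccmp cid zhom O ph in blast)+
  have e2: "tc_cmp T (tc_shM T (tc_idm T X)) (tc_zero T Z0 (tc_shO T X)) = tc_cmp T (tc_zero T Z0 (tc_shO T X)) (tc_idm T Z0)"
    by (rule zero_unique[OF Z0(2) O(4)]) (use ccmp cid zhom O shhom in blast)+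
  have "tri_iso T (X, X, Z0, tc_idm T X, tc_zero T X Z0, tc_zero T Z0 (tc_shO T X))
     (X, X', Z0, \<phi>, tc_zero T X' Z0, tc_zero T Z0 (tc_shO T X)) (tc_idm T X) \<phi> (tc_idm T Z0)"
    unfolding tri_iso_def tri_mor_def using e1 e2 O cid ph phi iso_id by auto
  then have "(X, X', Z0, \<phi>, tc_zero T X' Z0, tc_zero T Z0 (tc_shO T X)) \<in> tc_Dist T"
    using dist_iso d tr by blast
  then show ?thesis using B Z0 X unfolding ext_closed_def by blast
qed

lemma zero_ex: "is_zero_obj T Z \<Longrightarrow> Y \<in> tc_Obj T \<Longrightarrow> tc_zero T Z Y \<in> tc_Hom T Z Y \<and> tc_zero T Y Z \<in> tc_Hom T Y Z"
  using zhom zero_obj by blast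

lemma zero_iso: assumes "is_zero_obj T Z1" "is_zero_obj T Z2" shows "\<exists>f. is_iso T Z1 Z2 f"
proof -
  have O: "Z1 \<in> tc_Obj T" "Z2 \<in> tc_Obj T" using assms zero_obj by auto
  define f where "f = tc_zero T Z1 Z2"
  define g where "g = tc_zero T Z2 Z1"
  have f: "f \<in> tc_Hom T Z1 Z2" and g: "g \<in> tc_Hom T Z2 Z1" unfolding f_def g_def using zhom O by auto
  have "tc_cmp T g f = tc_idm T Z1" using zero_unique[OF assms(1) O(1) ccmp[OF f g] cid[OF O(1)]] .
  moreover have "tc_cmp T f g = tc_idm T Z2" using zero_unique[OF assms(2) O(2) ccmp[OF g f] cid[OF O(2)]] .
  ultimately show ?thesis unfolding is_iso_def using f g by blast
qed

lemma zero_all: assumes "ext_closed T B" "contains_zero T B" "is_zero_obj T Z" shows "Z \<in> B"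
proof -
  obtain Z0 where z: "Z0 \<in> B" "is_zero_obj T Z0" using assms(2) unfolding contains_zero_def by blast
  obtain f where f: "is_iso T Z0 Z f" using zero_iso[OF z(2) assms(3)] by blast
  show ?thesis by (rule iso_closed[OF assms(1) z z(1) f])
qed

lemma hull_obj: assumes S: "S \<subseteq> tc_Obj T" shows "ext_hull T S \<subseteq> tc_Obj T"
proof
  fix x assume "x \<in> ext_hull T S" then show "x \<in> tc_Obj T"
  proof (induct rule: ext_hull.induct)
    case (ext A B C f g h) then show ?case using dist_tri[OF ext(1)] hom_obj unfolding is_triangle_def by blast
  qed (use S zero_obj in auto)
qed

lemma hull_least: assumes "S \<subseteq> B" "ext_closed T B" "contains_zero T B" shows "ext_hull T S \<subseteq> B"
proof
  fix x assume "x \<in> ext_hull T S" then show "x \<in> B"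
  proof (induct rule: ext_hull.induct)
    case (ext A B' C f g h) then show ?case using assms(2) unfolding ext_closed_def by blast
  next
    case (base x) then show ?case using assms(1) by blast
  next
    case (zero Z) then show ?case using zero_all[OF assms(2,3)] by blast
  qed
qed

lemma hull_mono: assumes "S \<subseteq> S'" shows "ext_hull T S \<subseteq> ext_hull T S'"
proof
  fix x assume "x \<in> ext_hull T S" then show "x \<in> ext_hull T S'"
    by (induct rule: ext_hull.induct) (use assms in \<open>auto intro: ext_hull.intros\<close>)
qed

lemma hull_ext: "ext_closed T (ext_hull T S)"
  unfolding ext_closed_def by (auto intro: ext_hull.ext)

lemma hull_zero: "contains_zero T (ext_hull T S)"
proof -
  obtain Z where "is_zero_obj T Z" using exzero by blast
  then show ?thesis unfolding contains_zero_def by (blast intro: ext_hull.zero)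
qed

lemma iso_inv2: assumes "is_iso T X Y f"
  shows "\<exists>g. is_iso T Y X g \<and> g \<in> tc_Hom T Y X \<and> f \<in> tc_Hom T X Y \<and> tc_cmp T g f = tc_idm T X \<and> tc_cmp T f g = tc_idm T Y"
  using assms unfolding is_iso_def by blast

lemma uniq_post: assumes u: "\<exists>!f. f \<in> tc_Hom T P Q" and w: "is_iso T Q Q' \<omega>"
  shows "\<exists>!f. f \<in> tc_Hom T P Q'"
proof -
  obtain \<omega>' where w': "\<omega>' \<in> tc_Hom T Q' Q" "\<omega> \<in> tc_Hom T Q Q'" "tc_cmp T \<omega> \<omega>' = tc_idm T Q'"
    using iso_inv2[OF w] by blast
  obtain f0 where f0: "f0 \<in> tc_Hom T P Q" using u by blast
  have uq: "\<And>a b. a \<in> tc_Hom T P Q \<Longrightarrow> b \<in> tc_Hom T P Q \<Longrightarrow> a = b" using u by blast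
  have key: "k = tc_cmp T \<omega> f0" if k: "k \<in> tc_Hom T P Q'" for k
  proof -
    have "k = tc_cmp T (tc_cmp T \<omega> \<omega>') k" using w'(3) cidl[OF k] by simp
    also have "\<dots> = tc_cmp T \<omega> (tc_cmp T \<omega>' k)" using cassoc[OF k w'(1) w'(2)] by simp
    also have "tc_cmp T \<omega>' k = f0" using uq[OF ccmp[OF k w'(1)] f0] .
    finally show ?thesis .
  qed
  show ?thesis by (rule ex1I[of _ "tc_cmp T \<omega> f0"]) (rule ccmp[OF f0 w'(2)], erule key)
qed

lemma uniq_pre: assumes u: "\<exists>!f. f \<in> tc_Hom T P Q" and w: "is_iso T P' P \<omega>"
  shows "\<exists>!f. f \<in> tc_Hom T P' Q"
proof -
  obtain \<omega>' where w': "\<omega>' \<in> tc_Hom T P P'" "\<omega> \<in> tc_Hom T P' P" "tc_cmp T \<omega>' \<omega> = tc_idm T P'"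
    using iso_inv2[OF w] by blast
  obtain f0 where f0: "f0 \<in> tc_Hom T P Q" using u by blast
  have uq: "\<And>a b. a \<in> tc_Hom T P Q \<Longrightarrow> b \<in> tc_Hom T P Q \<Longrightarrow> a = b" using u by blast
  have key: "k = tc_cmp T f0 \<omega>" if k: "k \<in> tc_Hom T P' Q" for k
  proof -
    have "k = tc_cmp T k (tc_cmp T \<omega>' \<omega>)" using w'(3) cidr[OF k] by simp
    also have "\<dots> = tc_cmp T (tc_cmp T k \<omega>') \<omega>" using cassoc[OF w'(2) w'(1) k] by simp
    also have "tc_cmp T k \<omega>' = f0" using uq[OF ccmp[OF w'(1) k] f0] .
    finally show ?thesis .
  qed
  show ?thesis by (rule ex1I[of _ "tc_cmp T f0 \<omega>"]) (rule ccmp[OF w'(2) f0], erule key)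
qed

lemma iso_zero: assumes Z: "is_zero_obj T Z" and w: "is_iso T W Z \<phi>" shows "is_zero_obj T W"
proof -
  obtain \<phi>' where w': "is_iso T Z W \<phi>'" "\<phi> \<in> tc_Hom T W Z" using iso_inv2[OF w] by blast
  have W: "W \<in> tc_Obj T" using w'(2) hom_obj by blast
  show ?thesis unfolding is_zero_obj_def
  proof (intro conjI ballI W)
    fix V assume V: "V \<in> tc_Obj T"
    have "\<exists>!f. f \<in> tc_Hom T Z V" "\<exists>!f. f \<in> tc_Hom T V Z" using Z V unfolding is_zero_obj_def by blast+
    then show "\<exists>!f. f \<in> tc_Hom T W V" "\<exists>!f. f \<in> tc_Hom T V W"
      using uniq_pre[OF _ w] uniq_post[OF _ w'(1)] by blast+
  qed
qed

lemma desh_zero: assumes X: "X \<in> tc_Obj T" and Z: "is_zero_obj T (tc_shO T X)" shows "is_zero_obj T X"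
  unfolding is_zero_obj_def
proof (intro conjI ballI X)
  fix V assume V: "V \<in> tc_Obj T"
  have i1: "inj_on (tc_shM T) (tc_Hom T X V)" "inj_on (tc_shM T) (tc_Hom T V X)"
    using shbij[OF X V] shbij[OF V X] unfolding bij_betw_def by auto
  have SV: "tc_shO T V \<in> tc_Obj T" using shobj[OF V] .
  show "\<exists>!f. f \<in> tc_Hom T X V"
  proof (rule ex_ex1I)
    show "\<exists>f. f \<in> tc_Hom T X V" using zhom[OF X V] by blast
    fix f g assume fg: "f \<in> tc_Hom T X V" "g \<in> tc_Hom T X V"
    have "tc_shM T f = tc_shM T g" using zero_unique[OF Z SV shhom[OF fg(1)] shhom[OF fg(2)]] .
    then show "f = g" using inj_onD[OF i1(1) _ fg] by blast
  qed
  show "\<exists>!f. f \<in> tc_Hom T V X"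
  proof (rule ex_ex1I)
    show "\<exists>f. f \<in> tc_Hom T V X" using zhom[OF V X] by blast
    fix f g assume fg: "f \<in> tc_Hom T V X" "g \<in> tc_Hom T V X"
    have "tc_shM T f = tc_shM T g" using zero_unique2[OF Z SV shhom[OF fg(1)] shhom[OF fg(2)]] .
    then show "f = g" using inj_onD[OF i1(2) _ fg] by blast
  qed
qed

lemma sh_uniq: assumes "\<exists>!f. f \<in> tc_Hom T P Q" "P \<in> tc_Obj T" "Q \<in> tc_Obj T"
  shows "\<exists>!f. f \<in> tc_Hom T (tc_shO T P) (tc_shO T Q)"
proof -
  have b: "tc_shM T ` tc_Hom T P Q = tc_Hom T (tc_shO T P) (tc_shO T Q)"
    using shbij[OF assms(2,3)] unfolding bij_betw_def by blast
  obtain f0 where f0: "f0 \<in> tc_Hom T P Q" using assms(1) by blast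
  have uq: "\<And>a b. a \<in> tc_Hom T P Q \<Longrightarrow> b \<in> tc_Hom T P Q \<Longrightarrow> a = b" using assms(1) by blast
  have key: "k = tc_shM T f0" if k: "k \<in> tc_Hom T (tc_shO T P) (tc_shO T Q)" for k
  proof -
    obtain k0 where "k0 \<in> tc_Hom T P Q" "k = tc_shM T k0" using k b by blast
    then show ?thesis using uq[OF _ f0] by blast
  qed
  show ?thesis by (rule ex1I[of _ "tc_shM T f0"]) (rule shhom[OF f0], erule key)
qed

lemma sh_zero: assumes Z: "is_zero_obj T Z" shows "is_zero_obj T (tc_shO T Z)"
  unfolding is_zero_obj_def
proof (intro conjI ballI)
  have ZO: "Z \<in> tc_Obj T" using Z zero_obj by auto
  then show "tc_shO T Z \<in> tc_Obj T" using shobj by auto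
  fix V assume V: "V \<in> tc_Obj T"
  obtain V0 \<omega> where V0: "V0 \<in> tc_Obj T" "is_iso T (tc_shO T V0) V \<omega>" using shsurj[OF V] by blast
  obtain \<omega>' where w': "is_iso T V (tc_shO T V0) \<omega>'" using iso_inv2[OF V0(2)] by blast
  have "\<exists>!f. f \<in> tc_Hom T Z V0" "\<exists>!f. f \<in> tc_Hom T V0 Z" using Z V0(1) unfolding is_zero_obj_def by blast+
  then have "\<exists>!f. f \<in> tc_Hom T (tc_shO T Z) (tc_shO T V0)" "\<exists>!f. f \<in> tc_Hom T (tc_shO T V0) (tc_shO T Z)"
    using sh_uniq ZO V0(1) by blast+
  then show "\<exists>!f. f \<in> tc_Hom T (tc_shO T Z) V" "\<exists>!f. f \<in> tc_Hom T V (tc_shO T Z)"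
    using uniq_post[OF _ V0(2)] uniq_pre[OF _ w'] by blast+
qed

lemma rot3: "(X,Y,Z,f,g,h) \<in> tc_Dist T \<Longrightarrow> \<exists>f' g' h'. (tc_shO T X, tc_shO T Y, tc_shO T Z, f', g', h') \<in> tc_Dist T"
  by (meson rot)


lemma transport:
  assumes d: "(A,Y,C,f,g,h) \<in> tc_Dist T"
    and a: "is_iso T (tc_shO T Xa) A \<alpha>" and y: "is_iso T (tc_shO T X) Y \<psi>" and c: "is_iso T (tc_shO T Xc) C \<gamma>"
  shows "\<exists>f' g' h'. (tc_shO T Xa, tc_shO T X, tc_shO T Xc, f', g', h') \<in> tc_Dist T"
proof -
  obtain \<alpha>' where a': "is_iso T A (tc_shO T Xa) \<alpha>'" "\<alpha>' \<in> tc_Hom T A (tc_shO T Xa)" "\<alpha> \<in> tc_Hom T (tc_shO T Xa) A"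
     "tc_cmp T \<alpha> \<alpha>' = tc_idm T A" using iso_inv2[OF a] by blast
  obtain \<psi>' where y': "is_iso T Y (tc_shO T X) \<psi>'" "\<psi>' \<in> tc_Hom T Y (tc_shO T X)" "\<psi> \<in> tc_Hom T (tc_shO T X) Y"
     "tc_cmp T \<psi> \<psi>' = tc_idm T Y" using iso_inv2[OF y] by blast
  obtain \<gamma>' where c': "is_iso T C (tc_shO T Xc) \<gamma>'" "\<gamma>' \<in> tc_Hom T C (tc_shO T Xc)" "\<gamma> \<in> tc_Hom T (tc_shO T Xc) C"
     "tc_cmp T \<gamma> \<gamma>' = tc_idm T C" using iso_inv2[OF c] by blast
  have tf: "f \<in> tc_Hom T A Y" "g \<in> tc_Hom T Y C" "h \<in> tc_Hom T C (tc_shO T A)"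
    using dist_tri[OF d] unfolding is_triangle_def by auto
  have sa: "tc_shM T \<alpha>' \<in> tc_Hom T (tc_shO T A) (tc_shO T (tc_shO T Xa))" using shhom a' by blast
  define f' where "f' = tc_cmp T \<psi>' (tc_cmp T f \<alpha>)"
  define g' where "g' = tc_cmp T \<gamma>' (tc_cmp T g \<psi>)"
  define h' where "h' = tc_cmp T (tc_shM T \<alpha>') (tc_cmp T h \<gamma>)"
  have hf': "f' \<in> tc_Hom T (tc_shO T Xa) (tc_shO T X)" unfolding f'_def using ccmp a' y' tf by metis
  have hg': "g' \<in> tc_Hom T (tc_shO T X) (tc_shO T Xc)" unfolding g'_def using ccmp y' c' tf by metis
  have hh': "h' \<in> tc_Hom T (tc_shO T Xc) (tc_shO T (tc_shO T Xa))" unfolding h'_def using ccmp sa c' tf by metis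
  have e1: "tc_cmp T \<psi>' f = tc_cmp T f' \<alpha>'"
  proof -
    have "tc_cmp T f' \<alpha>' = tc_cmp T \<psi>' (tc_cmp T (tc_cmp T f \<alpha>) \<alpha>')"
      unfolding f'_def using cassoc ccmp a' y' tf by metis
    also have "tc_cmp T (tc_cmp T f \<alpha>) \<alpha>' = f" using cassoc a' tf cidr by metis
    finally show ?thesis by simp
  qed
  have e2: "tc_cmp T \<gamma>' g = tc_cmp T g' \<psi>'"
  proof -
    have "tc_cmp T g' \<psi>' = tc_cmp T \<gamma>' (tc_cmp T (tc_cmp T g \<psi>) \<psi>')"
      unfolding g'_def using cassoc ccmp c' y' tf by metis
    also have "tc_cmp T (tc_cmp T g \<psi>) \<psi>' = g" using cassoc y' tf cidr by metis
    finally show ?thesis by simp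
  qed
  have e3: "tc_cmp T (tc_shM T \<alpha>') h = tc_cmp T h' \<gamma>'"
  proof -
    have "tc_cmp T h' \<gamma>' = tc_cmp T (tc_shM T \<alpha>') (tc_cmp T (tc_cmp T h \<gamma>) \<gamma>')"
      unfolding h'_def using cassoc ccmp c' sa tf by metis
    also have "tc_cmp T (tc_cmp T h \<gamma>) \<gamma>' = h" using cassoc c' tf cidr by metis
    finally show ?thesis by simp
  qed
  have tr: "is_triangle T (tc_shO T Xa, tc_shO T X, tc_shO T Xc, f', g', h')"
    unfolding is_triangle_def using hf' hg' hh' by auto
  have "tri_iso T (A,Y,C,f,g,h) (tc_shO T Xa, tc_shO T X, tc_shO T Xc, f', g', h') \<alpha>' \<psi>' \<gamma>'"
    unfolding tri_iso_def tri_mor_def using e1 e2 e3 a' y' c' by auto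
  then show ?thesis using dist_iso[OF d tr] by blast
qed

lemma desusp:
  assumes d: "(tc_shO T Xa, tc_shO T X, tc_shO T Xc, f', g', h') \<in> tc_Dist T"
    and O: "Xa \<in> tc_Obj T" "X \<in> tc_Obj T" "Xc \<in> tc_Obj T"
  shows "\<exists>u v w. (Xa, X, Xc, u, v, w) \<in> tc_Dist T"
proof -
  have tf: "f' \<in> tc_Hom T (tc_shO T Xa) (tc_shO T X)" "g' \<in> tc_Hom T (tc_shO T X) (tc_shO T Xc)"
    "h' \<in> tc_Hom T (tc_shO T Xc) (tc_shO T (tc_shO T Xa))"
    using dist_tri[OF d] unfolding is_triangle_def by auto
  obtain f0 where f0: "f0 \<in> tc_Hom T Xc (tc_shO T Xa)" "tc_shM T f0 = tc_neg T h'"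
    using full[OF neghom[OF tf(3)] O(3) shobj[OF O(1)]] by blast
  have n1: "tc_neg T (tc_shM T f0) = h'" using f0 negneg tf by metis
  have d1: "(Xc, tc_shO T Xa, tc_shO T X, f0, f', g') \<in> tc_Dist T"
    using rot_iff[of Xc "tc_shO T Xa" "tc_shO T X" f0 f' g'] f0 tf d n1
    unfolding is_triangle_def by auto
  obtain g0 where g0: "g0 \<in> tc_Hom T X Xc" "tc_shM T g0 = tc_neg T g'"
    using full[OF neghom[OF tf(2)] O(2) O(3)] by blast
  have n2: "tc_neg T (tc_shM T g0) = g'" using g0 negneg tf by metis
  have d2: "(X, Xc, tc_shO T Xa, g0, f0, f') \<in> tc_Dist T"
    using rot_iff[of X Xc "tc_shO T Xa" g0 f0 f'] f0 g0 tf d1 n2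
    unfolding is_triangle_def by auto
  obtain u0 where u0: "u0 \<in> tc_Hom T Xa X" "tc_shM T u0 = tc_neg T f'"
    using full[OF neghom[OF tf(1)] O(1) O(2)] by blast
  have n3: "tc_neg T (tc_shM T u0) = f'" using u0 negneg tf by metis
  have "(Xa, X, Xc, u0, g0, f0) \<in> tc_Dist T"
    using rot_iff[of Xa X Xc u0 g0 f0] f0 g0 u0 tf d2 n3
    unfolding is_triangle_def by auto
  then show ?thesis by blast
qed


lemma good_parts: assumes "good_metric T A"
  shows "A n \<subseteq> tc_Obj T" "contains_zero T (A n)" "ext_closed T (A n)" "A (Suc n) \<subseteq> A n"
    "X \<in> tc_Obj T \<Longrightarrow> tc_shO T X \<in> A (Suc n) \<Longrightarrow> X \<in> A n"
    "X \<in> A (Suc n) \<Longrightarrow> tc_shO T X \<in> A n"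
  using assms unfolding good_metric_def by blast+

lemma good_mono: assumes "good_metric T A" "k \<le> m" shows "A m \<subseteq> A k"
  using assms(2)
proof (induct m)
  case (Suc m) then show ?case using good_parts(4)[OF assms(1), of m] by (cases "k = Suc m") auto
qed simp

lemma base_case: assumes A: "good_metric T A" and Y: "Y \<in> A (Suc n)" and X: "X \<in> tc_Obj T"
  and i: "is_iso T (tc_shO T X) Y \<phi>" shows "X \<in> A n"
proof -
  obtain \<phi>' where "is_iso T Y (tc_shO T X) \<phi>'" using iso_inv[OF i] by blast
  moreover obtain Z0 where "Z0 \<in> A (Suc n)" "is_zero_obj T Z0" using good_parts(2)[OF A] unfolding contains_zero_def by blast
  ultimately have "tc_shO T X \<in> A (Suc n)" using iso_closed good_parts(3)[OF A] Y by blast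
  then show ?thesis using good_parts(5)[OF A X] by blast
qed

lemma desh_hull: assumes A: "good_metric T A" and C: "good_metric T C"
  and Y: "Y \<in> ext_hull T (A (Suc n) \<union> C (Suc n))"
  shows "\<forall>X\<in>tc_Obj T. \<forall>\<phi>. is_iso T (tc_shO T X) Y \<phi> \<longrightarrow> X \<in> ext_hull T (A n \<union> C n)"
  using Y
proof induct
  case (base x) then show ?case using base_case[OF A] base_case[OF C] by (blast intro: ext_hull.base)
next
  case (zero Z) then show ?case using iso_zero desh_zero by (blast intro: ext_hull.zero)
next
  case (ext Ay Y Cy f g h)
  show ?case
  proof (intro ballI allI impI)
    fix X \<phi> assume X: "X \<in> tc_Obj T" and i: "is_iso T (tc_shO T X) Y \<phi>"
    have O: "Ay \<in> tc_Obj T" "Cy \<in> tc_Obj T" using dist_tri[OF ext(1)] hom_obj unfolding is_triangle_def by auto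
    obtain Xa \<alpha> where a: "Xa \<in> tc_Obj T" "is_iso T (tc_shO T Xa) Ay \<alpha>" using shsurj O by blast
    obtain Xc \<gamma> where c: "Xc \<in> tc_Obj T" "is_iso T (tc_shO T Xc) Cy \<gamma>" using shsurj O by blast
    obtain f' g' h' where "(tc_shO T Xa, tc_shO T X, tc_shO T Xc, f', g', h') \<in> tc_Dist T"
      using transport[OF ext(1) a(2) i c(2)] by blast
    then obtain u v w where d: "(Xa, X, Xc, u, v, w) \<in> tc_Dist T" using desusp a c X by blast
    have "Xa \<in> ext_hull T (A n \<union> C n)" "Xc \<in> ext_hull T (A n \<union> C n)" using ext a c by blast+
    then show "X \<in> ext_hull T (A n \<union> C n)" using d by (blast intro: ext_hull.ext)
  qed
qed

lemma sh_hull: assumes A: "good_metric T A" and C: "good_metric T C"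
  and Y: "Y \<in> ext_hull T (A (Suc n) \<union> C (Suc n))"
  shows "tc_shO T Y \<in> ext_hull T (A n \<union> C n)"
  using Y
proof induct
  case (base x) then show ?case using good_parts(6)[OF A] good_parts(6)[OF C] by (blast intro: ext_hull.base)
next
  case (zero Z) show ?case by (rule ext_hull.zero[OF sh_zero[OF zero]])
next
  case (ext Ay Y Cy f g h)
  obtain f' g' h' where "(tc_shO T Ay, tc_shO T Y, tc_shO T Cy, f', g', h') \<in> tc_Dist T"
    using rot3[OF ext(1)] by blast
  then show ?case using ext(3) ext(5) by (rule ext_hull.ext)
qed

lemma join_good: assumes A: "good_metric T A" and C: "good_metric T C"
  shows "good_metric T (metric_join T A C)"
  unfolding good_metric_def metric_join_def
proof (intro conjI allI)
  fix n
  show "ext_hull T (A n \<union> C n) \<subseteq> tc_Obj T" by (rule hull_obj) (use good_parts(1)[OF A] good_parts(1)[OF C] in blast)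
  show "contains_zero T (ext_hull T (A n \<union> C n))" by (rule hull_zero)
  show "ext_closed T (ext_hull T (A n \<union> C n))" by (rule hull_ext)
  show "ext_hull T (A (Suc n) \<union> C (Suc n)) \<subseteq> ext_hull T (A n \<union> C n)"
    by (rule hull_mono) (use good_parts(4)[OF A] good_parts(4)[OF C] in blast)
  then show "{X \<in> tc_Obj T. tc_shO T X \<in> ext_hull T (A (Suc n) \<union> C (Suc n))} \<union>
         ext_hull T (A (Suc n) \<union> C (Suc n)) \<union> tc_shO T ` ext_hull T (A (Suc n) \<union> C (Suc n))
         \<subseteq> ext_hull T (A n \<union> C n)"
  proof -
    have d: "X \<in> ext_hull T (A n \<union> C n)" if "X \<in> tc_Obj T" "tc_shO T X \<in> ext_hull T (A (Suc n) \<union> C (Suc n))" for X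
      using desh_hull[OF A C that(2), rule_format, OF that(1) iso_id[OF shobj[OF that(1)]]] .
    have s: "tc_shO T Y \<in> ext_hull T (A n \<union> C n)" if "Y \<in> ext_hull T (A (Suc n) \<union> C (Suc n))" for Y
      using sh_hull[OF A C that] .
    have m: "ext_hull T (A (Suc n) \<union> C (Suc n)) \<subseteq> ext_hull T (A n \<union> C n)" by fact
    show ?thesis
    proof (intro Un_least subsetI)
      fix x assume "x \<in> {X \<in> tc_Obj T. tc_shO T X \<in> ext_hull T (A (Suc n) \<union> C (Suc n))}"
      then show "x \<in> ext_hull T (A n \<union> C n)" using d by blast
    next
      fix x assume "x \<in> ext_hull T (A (Suc n) \<union> C (Suc n))"
      then show "x \<in> ext_hull T (A n \<union> C n)" using m by blast
    next
      fix x assume "x \<in> tc_shO T ` ext_hull T (A (Suc n) \<union> C (Suc n))"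
      then obtain y where "y \<in> ext_hull T (A (Suc n) \<union> C (Suc n))" "x = tc_shO T y" by blast
      then show "x \<in> ext_hull T (A n \<union> C n)" using s by blast
    qed
  qed
qed

lemma meet_good: assumes A: "good_metric T A" and C: "good_metric T C"
  shows "good_metric T (metric_meet A C)"
  unfolding good_metric_def metric_meet_def
proof (intro conjI allI)
  fix n
  show "A n \<inter> C n \<subseteq> tc_Obj T" using good_parts(1)[OF A] by blast
  show "ext_closed T (A n \<inter> C n)" using good_parts(3)[OF A] good_parts(3)[OF C] unfolding ext_closed_def by blast
  obtain Z where Z: "Z \<in> A n" "is_zero_obj T Z" using good_parts(2)[OF A] unfolding contains_zero_def by blast
  have "Z \<in> C n" by (rule zero_all[OF good_parts(3)[OF C] good_parts(2)[OF C] Z(2)])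
  then show "contains_zero T (A n \<inter> C n)" using Z unfolding contains_zero_def by blast
  show "A (Suc n) \<inter> C (Suc n) \<subseteq> A n \<inter> C n" using good_parts(4)[OF A] good_parts(4)[OF C] by blast
  show "{X \<in> tc_Obj T. tc_shO T X \<in> A (Suc n) \<inter> C (Suc n)} \<union> A (Suc n) \<inter> C (Suc n) \<union>
         tc_shO T ` (A (Suc n) \<inter> C (Suc n)) \<subseteq> A n \<inter> C n"
    using good_parts(4,5,6)[OF A] good_parts(4,5,6)[OF C] by blast
qed

lemma two_le: assumes A: "good_metric T A" and C: "good_metric T C"
  and "metric_le A A'" "metric_le C C'" shows "\<exists>m. A m \<subseteq> A' n \<and> C m \<subseteq> C' n"
proof -
  obtain m1 m2 where m: "A m1 \<subseteq> A' n" "C m2 \<subseteq> C' n" using assms unfolding metric_le_def by blast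
  have "A (max m1 m2) \<subseteq> A m1" by (rule good_mono[OF A]) simp
  moreover have "C (max m1 m2) \<subseteq> C m2" by (rule good_mono[OF C]) simp
  ultimately have "A (max m1 m2) \<subseteq> A' n \<and> C (max m1 m2) \<subseteq> C' n" using m by blast
  then show ?thesis by blast
qed

lemma meet_le_resp: assumes A: "good_metric T A" and C: "good_metric T C"
  and "metric_le A A'" "metric_le C C'" shows "metric_le (metric_meet A C) (metric_meet A' C')"
  unfolding metric_le_def metric_meet_def
proof
  fix n
  obtain m where "A m \<subseteq> A' n" "C m \<subseteq> C' n" using two_le[OF assms] by blast
  then show "\<exists>m. A m \<inter> C m \<subseteq> A' n \<inter> C' n" by blast
qed

lemma join_le_resp: assumes A: "good_metric T A" and C: "good_metric T C"
  and "metric_le A A'" "metric_le C C'" shows "metric_le (metric_join T A C) (metric_join T A' C')"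
  unfolding metric_le_def metric_join_def
proof
  fix n
  obtain m where "A m \<subseteq> A' n" "C m \<subseteq> C' n" using two_le[OF assms] by blast
  then have "ext_hull T (A m \<union> C m) \<subseteq> ext_hull T (A' n \<union> C' n)" by (intro hull_mono) blast
  then show "\<exists>m. ext_hull T (A m \<union> C m) \<subseteq> ext_hull T (A' n \<union> C' n)" by blast
qed

lemma meet_glb: assumes D: "good_metric T D" and "metric_le D A" "metric_le D C"
  shows "metric_le D (metric_meet A C)"
  unfolding metric_le_def metric_meet_def
proof
  fix n
  obtain m where "D m \<subseteq> A n" "D m \<subseteq> C n" using two_le[OF D D assms(2,3)] by blast
  then show "\<exists>m. D m \<subseteq> A n \<inter> C n" by blast
qed

lemma join_lub: assumes A: "good_metric T A" and C: "good_metric T C" and D: "good_metric T D"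
  and "metric_le A D" "metric_le C D"
  shows "metric_le (metric_join T A C) D"
  unfolding metric_le_def metric_join_def
proof
  fix n
  obtain m where "A m \<subseteq> D n" "C m \<subseteq> D n" using two_le[OF A C assms(4,5)] by blast
  then have "ext_hull T (A m \<union> C m) \<subseteq> D n"
    by (intro hull_least good_parts(2,3)[OF D]) blast
  then show "\<exists>m. ext_hull T (A m \<union> C m) \<subseteq> D n" by blast
qed

end

theorem proposition5p2:
  fixes T :: "('o,'m) tcat"
  assumes "is_triangulated T"
  shows "(\<forall>A C. good_metric T A \<and> good_metric T C \<longrightarrow>
            good_metric T (metric_meet A C) \<and>
            metric_le (metric_meet A C) A \<and> metric_le (metric_meet A C) C \<and>
            (\<forall>D. good_metric T D \<and> metric_le D A \<and> metric_le D C \<longrightarrow> metric_le D (metric_meet A C)) \<and>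
            good_metric T (metric_join T A C) \<and>
            metric_le A (metric_join T A C) \<and> metric_le C (metric_join T A C) \<and>
            (\<forall>D. good_metric T D \<and> metric_le A D \<and> metric_le C D \<longrightarrow> metric_le (metric_join T A C) D))
       \<and> (\<forall>A A' C C'. good_metric T A \<and> good_metric T A' \<and> good_metric T C \<and> good_metric T C' \<and>
            metric_equiv A A' \<and> metric_equiv C C' \<longrightarrow>
            metric_equiv (metric_meet A C) (metric_meet A' C') \<and>
            metric_equiv (metric_join T A C) (metric_join T A' C'))"
proof -
  interpret trcat T using assms by unfold_locales
  show ?thesis
  proof (intro conjI allI impI)
    fix A C assume AC: "good_metric T A \<and> good_metric T C"
    then have A: "good_metric T A" and C: "good_metric T C" by auto
    show "good_metric T (metric_meet A C)" by (rule meet_good[OF A C])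
    show "metric_le (metric_meet A C) A" unfolding metric_le_def metric_meet_def by blast
    show "metric_le (metric_meet A C) C" unfolding metric_le_def metric_meet_def by blast
    show "good_metric T (metric_join T A C)" by (rule join_good[OF A C])
    show "metric_le A (metric_join T A C)" unfolding metric_le_def metric_join_def
      by (blast intro: ext_hull.base)
    show "metric_le C (metric_join T A C)" unfolding metric_le_def metric_join_def
      by (blast intro: ext_hull.base)
    fix D
    show "metric_le D (metric_meet A C)" if "good_metric T D \<and> metric_le D A \<and> metric_le D C"
      using meet_glb that by blast
    show "metric_le (metric_join T A C) D" if "good_metric T D \<and> metric_le A D \<and> metric_le C D"
      using join_lub[OF A C] that by blast
  next
    fix A A' C C'
    assume H: "good_metric T A \<and> good_metric T A' \<and> good_metric T C \<and> good_metric T C' \<and>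
            metric_equiv A A' \<and> metric_equiv C C'"
    then have g: "good_metric T A" "good_metric T A'" "good_metric T C" "good_metric T C'"
      and l: "metric_le A A'" "metric_le A' A" "metric_le C C'" "metric_le C' C"
      unfolding metric_equiv_def by auto
    show "metric_equiv (metric_meet A C) (metric_meet A' C')" unfolding metric_equiv_def
      using meet_le_resp[OF g(1,3) l(1,3)] meet_le_resp[OF g(2,4) l(2,4)] by blast
    show "metric_equiv (metric_join T A C) (metric_join T A' C')" unfolding metric_equiv_def
      using join_le_resp[OF g(1,3) l(1,3)] join_le_resp[OF g(2,4) l(2,4)] by blast
  qed
qed

end
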